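(* Let $(V,P)$ be a finite, irreducible, reversible Markov chain with reversible probability measure $m$ (so $m(V)=1$). Then \[ \tfrac14\,\alpha_{\operatorname{cap}}^\theta \;\le\; \alpha_{\operatorname{spectral}} \;\le\; 2\,\alpha_{\operatorname{cap}}^\theta . \]
   Context: $V$ is a finite set, $P:V\times V\to[0,\infty)$ has symmetric support ($P(x,y)>0\iff P(y,x)>0$), the chain is connected, and $m$ is a probability measure on $V$ with $m(x)P(x,y)=m(y)P(y,x)$ for all $x,y$. The Laplacian is $\Delta f(x)=\sum_y P(x,y)(f(y)-f(x))$, the inner product is $\langle f,g\rangle=\sum_x f(x)g(x)m(x)$, $\|f\|_2=\langle f,f\rangle^{1/2}$, and the Dirichlet form is $\mathcal E(f,g)=-\langle \Delta f,g\rangle$, $\mathcal E(f)=\mathcal E(f,f)$. For disjoint nonempty $A,B\subset V$, $\operatorname{cap}(A,B)=\min\{\mathcal E(f): f|_A=0,\ f|_B=1\}$. The logarithmic mean is $\theta(s,t)=(s-t)/(\log s-\log t)$ for $s\ne t$ and $\theta(s,s)=s$. Define $\alpha_{\operatorname{cap}}^\theta=\inf_{A,B}\theta\big(\operatorname{cap}(A,B)/m(A),\operatorname{cap}(A,B)/m(B)\big)$ over disjoint nonempty $A,B\subset V$. For nonempty $X\subsetneq V$, $\lambda_X=\inf\{\mathcal E(f,f):\|f\|_2=1,\ f|_{V\setminus X}=0\}$, and $\alpha_{\operatorname{spectral}}=\inf_{X}\theta(\lambda_X,\lambda_{V\setminus X})$ over nonempty proper subsets $X\subset V$. *)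

theory Defs
  imports Complex_Main
begin

text \<open>Functions on V are represented as 'a => real;
  all sums range over V, so values outside V are irrelevant.\<close>

definition laplacian :: "'a set \<Rightarrow> ('a \<Rightarrow> 'a \<Rightarrow> real) \<Rightarrow> ('a \<Rightarrow> real) \<Rightarrow> 'a \<Rightarrow> real" where
  "laplacian V P f x = (\<Sum>y\<in>V. P x y * (f y - f x))"

definition inner_m :: "'a set \<Rightarrow> ('a \<Rightarrow> real) \<Rightarrow> ('a \<Rightarrow> real) \<Rightarrow> ('a \<Rightarrow> real) \<Rightarrow> real" where
  "inner_m V m f g = (\<Sum>x\<in>V. f x * g x * m x)"

definition norm2_m :: "'a set \<Rightarrow> ('a \<Rightarrow> real) \<Rightarrow> ('a \<Rightarrow> real) \<Rightarrow> real" where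
  "norm2_m V m f = sqrt (inner_m V m f f)"

definition dirichlet :: "'a set \<Rightarrow> ('a \<Rightarrow> 'a \<Rightarrow> real) \<Rightarrow> ('a \<Rightarrow> real) \<Rightarrow> ('a \<Rightarrow> real) \<Rightarrow> ('a \<Rightarrow> real) \<Rightarrow> real" where
  "dirichlet V P m f g = - inner_m V m (laplacian V P f) g"

definition capacity :: "'a set \<Rightarrow> ('a \<Rightarrow> 'a \<Rightarrow> real) \<Rightarrow> ('a \<Rightarrow> real) \<Rightarrow> 'a set \<Rightarrow> 'a set \<Rightarrow> real" where
  "capacity V P m A B =
     Inf {dirichlet V P m f f | f. (\<forall>x\<in>A. f x = 0) \<and> (\<forall>x\<in>B. f x = 1)}"

definition logmean :: "real \<Rightarrow> real \<Rightarrow> real" where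
  "logmean s t = (if s = t then s else (s - t) / (ln s - ln t))"

definition alpha_cap :: "'a set \<Rightarrow> ('a \<Rightarrow> 'a \<Rightarrow> real) \<Rightarrow> ('a \<Rightarrow> real) \<Rightarrow> real" where
  "alpha_cap V P m = Inf {logmean (capacity V P m A B / sum m A) (capacity V P m A B / sum m B)
       | A B. A \<subseteq> V \<and> B \<subseteq> V \<and> A \<noteq> {} \<and> B \<noteq> {} \<and> A \<inter> B = {}}"

definition lambda_D :: "'a set \<Rightarrow> ('a \<Rightarrow> 'a \<Rightarrow> real) \<Rightarrow> ('a \<Rightarrow> real) \<Rightarrow> 'a set \<Rightarrow> real" where
  "lambda_D V P m X = Inf {dirichlet V P m f f | f. norm2_m V m f = 1 \<and> (\<forall>x\<in>V - X. f x = 0)}"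

definition alpha_spectral :: "'a set \<Rightarrow> ('a \<Rightarrow> 'a \<Rightarrow> real) \<Rightarrow> ('a \<Rightarrow> real) \<Rightarrow> real" where
  "alpha_spectral V P m = Inf {logmean (lambda_D V P m X) (lambda_D V P m (V - X))
       | X. X \<subseteq> V \<and> X \<noteq> {} \<and> X \<noteq> V}"

end

theory Submission
  imports Defs "HOL-Analysis.Analysis"
begin

definition slp :: "real \<Rightarrow> real \<Rightarrow> real" where
  "slp s t = (if s = t then 1 / s else (ln s - ln t) / (s - t))"

lemma slp_sym: "slp s t = slp t s"
proof (cases "s = t")
  case False
  have "(ln s - ln t) / (s - t) = (ln t - ln s) / (t - s)"
    by (metis minus_diff_eq minus_divide_divide)
  then show ?thesis using False unfolding slp_def by auto
qed simp

lemma logmean_slp: "s > 0 \<Longrightarrow> t > 0 \<Longrightarrow> logmean s t = 1 / slp s t"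
  unfolding logmean_def slp_def by auto

lemma slp_pos: assumes "s > 0" "t > 0" shows "slp s t > 0"
proof (cases "s = t")
  case True then show ?thesis using assms by (simp add: slp_def)
next
  case False
  show ?thesis
  proof (cases "s < t")
    case True
    then have "ln s < ln t" using assms by simp
    then show ?thesis using True False by (simp add: slp_def divide_neg_neg)
  next
    case False
    with \<open>s \<noteq> t\<close> have "t < s" by simp
    then have "ln t < ln s" using assms by simp
    then show ?thesis using \<open>t < s\<close> by (simp add: slp_def)
  qed
qed

lemma slp3: assumes "0 < x" "x < y" "y < z"
  shows "slp x z \<le> slp x y" "slp y z \<le> slp x z"
proof -
  have cv: "convex_on {0<..} (\<lambda>x. - ln x)"
    using ln_concave by (simp add: concave_on_def)
  have m: "x \<in> {0<..}" "z \<in> {0<..}" using assms by auto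
  have h1: "((- ln x) - (- ln y)) / (x - y) \<le> ((- ln x) - (- ln z)) / (x - z)"
    using convex_on_slope_le(1)[OF cv m assms(2,3)] by simp
  have h2: "((- ln x) - (- ln z)) / (x - z) \<le> ((- ln y) - (- ln z)) / (y - z)"
    using convex_on_slope_le(2)[OF cv m assms(2,3)] by simp
  have e1: "((- ln x) - (- ln y)) / (x - y) = - ((ln x - ln y) / (x - y))" by (simp add: minus_divide_left)
  have e2: "((- ln x) - (- ln z)) / (x - z) = - ((ln x - ln z) / (x - z))" by (simp add: minus_divide_left)
  have e3: "((- ln y) - (- ln z)) / (y - z) = - ((ln y - ln z) / (y - z))" by (simp add: minus_divide_left)
  have s1: "slp x y = (ln x - ln y) / (x - y)" "slp x z = (ln x - ln z) / (x - z)" "slp y z = (ln y - ln z) / (y - z)"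
    using assms unfolding slp_def by auto
  show "slp x z \<le> slp x y" using h1 e1 e2 s1 by linarith
  show "slp y z \<le> slp x z" using h2 e2 e3 s1 by linarith
qed

lemma slp_eq_le: assumes "0 < s" "s < t" shows "slp s t \<le> slp s s" "slp t t \<le> slp s t" 
proof -
  have "ln (t/s) \<le> t/s - 1" using assms by (intro ln_le_minus_one) auto
  then have "ln t - ln s \<le> (t - s)/s" using assms by (simp add: ln_div diff_divide_distrib)
  then have "(ln t - ln s) / (t - s) \<le> (t - s)/s / (t - s)" using assms by (intro divide_right_mono) auto
  also have "(t - s)/s / (t - s) = 1 / s" using assms by simp
  finally have "(ln t - ln s) / (t - s) \<le> 1 / s" .
  moreover have "(ln t - ln s) / (t - s) = (ln s - ln t) / (s - t)"
    by (metis minus_diff_eq minus_divide_divide)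
  ultimately show "slp s t \<le> slp s s" using assms by (simp add: slp_def)
  have "ln (s/t) \<le> s/t - 1" using assms by (intro ln_le_minus_one) auto
  then have "ln s - ln t \<le> (s - t)/t" using assms by (simp add: ln_div diff_divide_distrib)
  moreover have "(t - s)/t = - ((s - t)/t)" by (simp add: minus_divide_left)
  ultimately have "(t - s)/t \<le> ln t - ln s" by linarith
  then have "(t - s)/t / (t - s) \<le> (ln t - ln s) / (t - s)" using assms by (intro divide_right_mono) auto
  moreover have "(t - s)/t / (t - s) = 1 / t" using assms by simp
  ultimately have "1 / t \<le> (ln t - ln s) / (t - s)" by simp
  moreover have "slp t t = 1 / t" by (simp add: slp_def)
  moreover have "slp s t = (ln s - ln t) / (s - t)" using assms by (simp add: slp_def)
  ultimately show "slp t t \<le> slp s t"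
    using \<open>(ln t - ln s) / (t - s) = (ln s - ln t) / (s - t)\<close> by simp
qed

lemma slp_anti: assumes "0 < a" "a \<le> a'" "0 < b" shows "slp a' b \<le> slp a b"
proof -
  have s1: "slp a' b = slp b a'" "slp a b = slp b a" by (rule slp_sym)+
  have "a = a' \<or> a < a'" using assms by auto
  moreover have "a' < b \<or> a' = b \<or> b < a'" by auto
  moreover have "a < b \<or> a = b \<or> b < a" by auto
  ultimately consider "a = a'" | "a < a'" "a' < b" | "a < a'" "a' = b" | "a < b" "b < a'" | "a = b" "b < a'" | "b < a" "a < a'"
    by fastforce
  then show ?thesis
  proof cases
    case 1 then show ?thesis by simp
  next
    case 2 then show ?thesis using slp3(2)[of a a' b] assms by linarith
  next
    case 3
    then have "slp a' b = slp b b" by simp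
    then show ?thesis using slp_eq_le(2)[of a b] assms 3 by linarith
  next
    case 4 then show ?thesis using slp3[of a b a'] assms s1 by linarith
  next
    case 5
    then have "slp a b = slp b b" by simp
    then show ?thesis using slp_eq_le(1)[of b a'] assms s1 5 by linarith
  next
    case 6 then show ?thesis using slp3(1)[of b a a'] assms s1 by linarith
  qed
qed

lemma logmean_mono: assumes "0 < a" "a \<le> a'" "0 < b" "b \<le> b'"
  shows "logmean a b \<le> logmean a' b'"
proof -
  have "slp a' b' \<le> slp a' b" using slp_anti[of b b' a'] assms by (simp add: slp_sym)
  also have "\<dots> \<le> slp a b" using slp_anti[of a a' b] assms by simp
  finally have "slp a' b' \<le> slp a b" .
  moreover have "0 < slp a' b'" using assms by (intro slp_pos) auto
  ultimately have "1 / slp a b \<le> 1 / slp a' b'" by (simp add: frac_le)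
  then show ?thesis using assms by (simp add: logmean_slp)
qed

lemma logmean_hom: assumes "0 < k" "0 < a" "0 < b" shows "logmean (k * a) (k * b) = k * logmean a b"
  using assms by (simp add: logmean_def ln_mult right_diff_distrib[symmetric])

lemma logmean_sym: "logmean a b = logmean b a"
  unfolding logmean_def by (metis minus_diff_eq minus_divide_divide)

lemma logmean_pos: "0 < a \<Longrightarrow> 0 < b \<Longrightarrow> 0 < logmean a b"
  by (simp add: logmean_slp slp_pos)

locale chain =
  fixes V :: "'a set" and P :: "'a \<Rightarrow> 'a \<Rightarrow> real" and m :: "'a \<Rightarrow> real"
  assumes fin: "finite V" and card2: "2 \<le> card V"
    and Pnn: "\<And>x y. x \<in> V \<Longrightarrow> y \<in> V \<Longrightarrow> P x y \<ge> 0"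
    and Psym: "\<And>x y. x \<in> V \<Longrightarrow> y \<in> V \<Longrightarrow> (P x y > 0 \<longleftrightarrow> P y x > 0)"
    and conn: "\<And>x y. x \<in> V \<Longrightarrow> y \<in> V \<Longrightarrow>
           (x, y) \<in> {(u, v). u \<in> V \<and> v \<in> V \<and> P u v > 0}\<^sup>*"
    and mnn: "\<And>x. x \<in> V \<Longrightarrow> m x \<ge> 0"
    and msum: "(\<Sum>x\<in>V. m x) = 1"
    and rev: "\<And>x y. x \<in> V \<Longrightarrow> y \<in> V \<Longrightarrow> m x * P x y = m y * P y x"
begin

definition c :: "'a \<Rightarrow> 'a \<Rightarrow> real" where "c x y = m x * P x y"

definition ee :: "('a \<Rightarrow> real) \<Rightarrow> ('a \<Rightarrow> real) \<Rightarrow> real" where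
  "ee f g = (\<Sum>x\<in>V. \<Sum>y\<in>V. c x y * (f x - f y) * (g x - g y)) / 2"

definition nrm :: "('a \<Rightarrow> real) \<Rightarrow> real" where
  "nrm f = (\<Sum>x\<in>V. f x * f x * m x)"

lemma mpos: assumes "x \<in> V" shows "m x > 0"
proof -
  have "\<exists>x0\<in>V. m x0 > 0"
  proof (rule ccontr)
    assume "\<not> ?thesis"
    then have "\<forall>x\<in>V. m x = 0" using mnn by force
    then have "(\<Sum>x\<in>V. m x) = 0" by simp
    then show False using msum by simp
  qed
  then obtain x0 where x0: "x0 \<in> V" "m x0 > 0" by blast
  have "(x0, x) \<in> {(u, v). u \<in> V \<and> v \<in> V \<and> P u v > 0}\<^sup>*" using conn x0 assms by blast
  then show ?thesis
  proof (induction rule: rtrancl_induct)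
    case base then show ?case using x0 by simp
  next
    case (step y z)
    then have yz: "y \<in> V" "z \<in> V" "P y z > 0" by auto
    then have "m y * P y z > 0" using step.IH by simp
    then have "m z * P z y > 0" using rev[OF yz(1,2)] by simp
    then have "m z \<noteq> 0" by auto
    then show ?case using mnn[OF yz(2)] by simp
  qed
qed

lemma c_sym: "x \<in> V \<Longrightarrow> y \<in> V \<Longrightarrow> c x y = c y x"
  unfolding c_def using rev by simp

lemma c_nn: "x \<in> V \<Longrightarrow> y \<in> V \<Longrightarrow> c x y \<ge> 0"
  unfolding c_def using mpos Pnn by (simp add: less_imp_le)

lemma c_pos: "x \<in> V \<Longrightarrow> y \<in> V \<Longrightarrow> P x y > 0 \<Longrightarrow> c x y > 0"
  unfolding c_def using mpos by simp

lemma dir_S: "dirichlet V P m f g = (\<Sum>x\<in>V. \<Sum>y\<in>V. c x y * (f x - f y) * g x)"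
proof -
  have "dirichlet V P m f g = - (\<Sum>x\<in>V. (\<Sum>y\<in>V. P x y * (f y - f x)) * g x * m x)"
    unfolding dirichlet_def inner_m_def laplacian_def by simp
  also have "\<dots> = (\<Sum>x\<in>V. - ((\<Sum>y\<in>V. P x y * (f y - f x)) * g x * m x))"
    by (simp add: sum_negf)
  also have "\<dots> = (\<Sum>x\<in>V. \<Sum>y\<in>V. c x y * (f x - f y) * g x)"
  proof (rule sum.cong[OF refl])
    fix x assume "x \<in> V"
    have "- ((\<Sum>y\<in>V. P x y * (f y - f x)) * g x * m x) = (\<Sum>y\<in>V. - (P x y * (f y - f x) * g x * m x))"
      by (simp add: sum_distrib_right sum_negf)
    also have "\<dots> = (\<Sum>y\<in>V. c x y * (f x - f y) * g x)"
      by (rule sum.cong[OF refl]) (simp add: c_def algebra_simps)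
    finally show "- ((\<Sum>y\<in>V. P x y * (f y - f x)) * g x * m x) = (\<Sum>y\<in>V. c x y * (f x - f y) * g x)" .
  qed
  finally show ?thesis .
qed

lemma dir_ee: "dirichlet V P m f g = ee f g"
proof -
  let ?S = "(\<Sum>x\<in>V. \<Sum>y\<in>V. c x y * (f x - f y) * g x)"
  have sw: "?S = (\<Sum>y\<in>V. \<Sum>x\<in>V. c x y * (f x - f y) * g x)" by (rule sum.swap)
  also have "\<dots> = (\<Sum>x\<in>V. \<Sum>y\<in>V. c x y * (f y - f x) * g y)"
    by (intro sum.cong refl) (simp add: c_sym)
  finally have S2: "?S = (\<Sum>x\<in>V. \<Sum>y\<in>V. c x y * (f y - f x) * g y)" .
  have "2 * ee f g = (\<Sum>x\<in>V. \<Sum>y\<in>V. c x y * (f x - f y) * (g x - g y))"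
    unfolding ee_def by simp
  also have "\<dots> = (\<Sum>x\<in>V. \<Sum>y\<in>V. c x y * (f x - f y) * g x + c x y * (f y - f x) * g y)"
    by (intro sum.cong refl) (simp add: algebra_simps)
  also have "\<dots> = ?S + (\<Sum>x\<in>V. \<Sum>y\<in>V. c x y * (f y - f x) * g y)"
    by (simp add: sum.distrib)
  also have "\<dots> = 2 * ?S" using S2 by simp
  finally show ?thesis using dir_S by simp
qed

lemma ee_sym: "ee f g = ee g f"
  unfolding ee_def by (intro arg_cong[where f="\<lambda>x. x / 2"] sum.cong refl) (simp add: algebra_simps)

lemma ee_nn: "ee f f \<ge> 0"
  unfolding ee_def
  by (intro divide_nonneg_pos sum_nonneg) (auto simp: c_nn mult.assoc)

lemma ee_lin: "ee f (\<lambda>x. a * g x + b * h x + k) = a * ee f g + b * ee f h"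
proof -
  have "ee f (\<lambda>x. a * g x + b * h x + k) =
     (\<Sum>x\<in>V. \<Sum>y\<in>V. a * (c x y * (f x - f y) * (g x - g y)) + b * (c x y * (f x - f y) * (h x - h y))) / 2"
    unfolding ee_def by (intro arg_cong[where f="\<lambda>x. x / 2"] sum.cong refl) (simp add: algebra_simps)
  also have "\<dots> = a * ee f g + b * ee f h"
    unfolding ee_def by (simp add: sum.distrib sum_distrib_left add_divide_distrib)
  finally show ?thesis .
qed

lemma ee_cong: "(\<And>x. x \<in> V \<Longrightarrow> g x = g' x) \<Longrightarrow> ee f g = ee f g'"
  unfolding ee_def by (intro arg_cong[where f="\<lambda>x. x / 2"] sum.cong refl) simp

lemma ee_scale: "ee (\<lambda>x. a * f x) (\<lambda>x. a * f x) = a^2 * ee f f"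
proof -
  have "ee (\<lambda>x. a * f x) (\<lambda>x. a * f x) = a * ee (\<lambda>x. a * f x) f"
    using ee_lin[of "\<lambda>x. a * f x" a f 0 f 0] by simp
  also have "ee (\<lambda>x. a * f x) f = a * ee f f"
    using ee_lin[of f a f 0 f 0] ee_sym by simp
  finally show ?thesis by (simp add: power2_eq_square)
qed

lemma ee_edge_mono:
  assumes "\<And>x y. x \<in> V \<Longrightarrow> y \<in> V \<Longrightarrow> (g x - g y)^2 \<le> (f x - f y) * (k x - k y)"
  shows "ee g g \<le> ee f k"
  unfolding ee_def
proof (intro divide_right_mono sum_mono)
  fix x y assume "x \<in> V" "y \<in> V"
  then show "c x y * (g x - g y) * (g x - g y) \<le> c x y * (f x - f y) * (k x - k y)"
    using assms[of x y] c_nn[of x y] mult_left_mono by (fastforce simp: power2_eq_square mult.assoc)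
qed simp

lemma nrm_nn: "nrm f \<ge> 0"
  unfolding nrm_def by (intro sum_nonneg) (simp add: mpos less_imp_le)

lemma nrm_scale: "nrm (\<lambda>x. a * f x) = a^2 * nrm f"
  unfolding nrm_def by (simp add: sum_distrib_left power2_eq_square algebra_simps)

lemma nrm_ge: assumes "B \<subseteq> V" "\<And>x. x \<in> B \<Longrightarrow> g x * g x \<ge> s" "s \<ge> 0"
  shows "nrm g \<ge> s * sum m B"
proof -
  have "s * sum m B = (\<Sum>x\<in>B. s * m x)" by (simp add: sum_distrib_left)
  also have "\<dots> \<le> (\<Sum>x\<in>B. g x * g x * m x)"
    using assms mpos by (intro sum_mono mult_right_mono) (auto simp: less_imp_le)
  also have "\<dots> \<le> (\<Sum>x\<in>V. g x * g x * m x)"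
    using assms mpos fin by (intro sum_mono2) (auto simp: less_imp_le)
  finally show ?thesis unfolding nrm_def .
qed

lemma msum_pos: "B \<subseteq> V \<Longrightarrow> B \<noteq> {} \<Longrightarrow> sum m B > 0"
  using mpos fin by (meson finite_subset subsetD sum_pos)

end

lemma clip_lip: "(max 0 (min 1 a) - max 0 (min 1 b))^2 \<le> (a - b) * (a - (b::real))"
proof -
  have "\<bar>max 0 (min 1 a) - max 0 (min 1 b)\<bar> \<le> \<bar>a - b\<bar>" by (auto simp: abs_if max_def min_def)
  then have "\<bar>max 0 (min 1 a) - max 0 (min 1 b)\<bar>^2 \<le> \<bar>a - b\<bar>^2" by (intro power_mono) auto
  then show ?thesis by (simp add: power2_eq_square)
qed

lemma quad_zero: assumes "\<And>e::real. 0 \<le> 2 * e * a + e^2 * b" shows "a = 0"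
proof (rule ccontr)
  assume "a \<noteq> 0"
  define d where "d = \<bar>b\<bar> + 1"
  have d: "d > 0" unfolding d_def by simp
  have "0 \<le> 2 * (-a/d) * a + (-a/d)^2 * b" by (rule assms)
  also have "\<dots> = (a^2 * b - 2 * a^2 * d) / d^2" using d by (simp add: field_simps power2_eq_square)
  also have "\<dots> < 0"
  proof -
    have "a^2 * b \<le> a^2 * \<bar>b\<bar>" by (intro mult_left_mono) auto
    moreover have "a^2 > 0" using \<open>a \<noteq> 0\<close> by simp
    moreover have "2 * a^2 * d = 2 * (a^2 * \<bar>b\<bar>) + 2 * a^2" by (simp add: d_def algebra_simps)
    moreover have "0 \<le> a^2 * \<bar>b\<bar>" by simp
    ultimately have "a^2 * \<bar>b\<bar> < 2 * a^2 * d" by linarith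
    then have "a^2 * b - 2 * a^2 * d < 0" using \<open>a^2 * b \<le> a^2 * \<bar>b\<bar>\<close> by linarith
    then show ?thesis using d by (simp add: divide_neg_pos)
  qed
  finally show False by simp
qed

context chain begin

definition feas :: "'a set \<Rightarrow> 'a set \<Rightarrow> ('a \<Rightarrow> real) \<Rightarrow> bool" where
  "feas A B f \<longleftrightarrow> (\<forall>x\<in>A. f x = 0) \<and> (\<forall>x\<in>B. f x = 1)"

lemma cap_set: "capacity V P m A B = Inf {ee f f | f. feas A B f}"
  unfolding capacity_def feas_def dir_ee by simp

lemma cap_le: "feas A B g \<Longrightarrow> capacity V P m A B \<le> ee g g"
  unfolding cap_set
  by (rule cInf_lower) (auto intro!: bdd_belowI[of _ 0] ee_nn)

lemma cap_min:
  assumes "A \<subseteq> V" "B \<subseteq> V" "A \<inter> B = {}"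
  shows "\<exists>h. feas A B h \<and> (\<forall>g. feas A B g \<longrightarrow> ee h h \<le> ee g g)"
proof -
  define S where "S x = (if x \<in> A then {0} else if x \<in> B then {1} else {0..1::real})" for x
  define K where "K = PiE V S"
  let ?T = "product_topology (\<lambda>_. euclideanreal) V"
  have cK: "compactin ?T K" unfolding K_def compactin_PiE by (auto simp: S_def)
  have cont: "continuous_map ?T euclideanreal (\<lambda>f. ee f f)"
    unfolding ee_def
    by (intro continuous_intros continuous_map_sum fin) (auto intro: continuous_map_product_projection)
  have comp: "compact ((\<lambda>f. ee f f) ` K)" using image_compactin[OF cK cont] by simp
  have "restrict (\<lambda>x. if x \<in> B then 1 else 0) V \<in> K"
    using assms unfolding K_def S_def by auto
  then have ne: "(\<lambda>f. ee f f) ` K \<noteq> {}" by blast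
  obtain v where v: "v \<in> (\<lambda>f. ee f f) ` K" "\<forall>t \<in> (\<lambda>f. ee f f) ` K. v \<le> t"
    using compact_attains_inf[OF comp ne] by blast
  then obtain h where h: "h \<in> K" "\<forall>g\<in>K. ee h h \<le> ee g g" by auto
  have fh: "feas A B h"
    unfolding feas_def
  proof safe
    fix x assume x: "x \<in> A"
    then have "x \<in> V" using assms by auto
    then have "h x \<in> S x" using h(1) unfolding K_def by (simp add: PiE_iff)
    then show "h x = 0" using x by (simp add: S_def)
  next
    fix x assume x: "x \<in> B"
    then have "x \<in> V" "x \<notin> A" using assms by auto
    then have "h x \<in> S x" using h(1) unfolding K_def by (simp add: PiE_iff)
    then show "h x = 1" using x \<open>x \<notin> A\<close> by (simp add: S_def)
  qed
  have "ee h h \<le> ee g g" if fg: "feas A B g" for g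
  proof -
    define g' where "g' = restrict (\<lambda>x. max 0 (min 1 (g x))) V"
    have "g' \<in> K" using fg assms unfolding g'_def K_def S_def feas_def by auto
    then have "ee h h \<le> ee g' g'" using h by blast
    also have "ee g' g' \<le> ee g g"
      by (rule ee_edge_mono) (simp add: g'_def clip_lip)
    finally show ?thesis .
  qed
  then show ?thesis using fh by blast
qed

lemma cap_attain:
  assumes "A \<subseteq> V" "B \<subseteq> V" "A \<inter> B = {}"
  shows "\<exists>h. feas A B h \<and> capacity V P m A B = ee h h \<and> (\<forall>g. feas A B g \<longrightarrow> ee h h \<le> ee g g)"
proof -
  obtain h where h: "feas A B h" "\<forall>g. feas A B g \<longrightarrow> ee h h \<le> ee g g" using cap_min[OF assms] by blast
  have "capacity V P m A B = ee h h"
    unfolding cap_set by (rule cInf_eq_minimum) (use h in auto)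
  then show ?thesis using h by blast
qed

lemma foc:
  assumes h: "feas A B h" "\<forall>g. feas A B g \<longrightarrow> ee h h \<le> ee g g"
    and phi: "\<And>x. x \<in> A \<Longrightarrow> \<phi> x = 0" "\<And>x. x \<in> B \<Longrightarrow> \<phi> x = 0"
  shows "ee h \<phi> = 0"
proof (rule quad_zero)
  fix e :: real
  define g where "g = (\<lambda>x. 1 * h x + e * \<phi> x + 0)"
  have "feas A B g" using h(1) phi unfolding feas_def g_def by auto
  then have "ee h h \<le> ee g g" using h(2) by blast
  also have "ee g g = ee g h + e * ee g \<phi>" unfolding g_def by (subst ee_lin) simp
  also have "ee g h = ee h h + e * ee h \<phi>" unfolding g_def by (subst ee_sym, subst ee_lin) simp
  also have "ee g \<phi> = ee \<phi> h + e * ee \<phi> \<phi>" unfolding g_def by (subst ee_sym, subst ee_lin) simp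
  also have "ee \<phi> h = ee h \<phi>" by (rule ee_sym)
  finally show "0 \<le> 2 * e * ee h \<phi> + e^2 * ee \<phi> \<phi>" by (simp add: algebra_simps power2_eq_square)
qed

lemma ee_zero_edge:
  assumes "ee h h = 0" "x \<in> V" "y \<in> V" "P x y > 0" shows "h x = h y"
proof -
  have nn: "\<forall>x\<in>V. \<forall>y\<in>V. 0 \<le> c x y * (h x - h y) * (h x - h y)"
    using c_nn by (auto simp: mult.assoc)
  have "(\<Sum>x\<in>V. \<Sum>y\<in>V. c x y * (h x - h y) * (h x - h y)) = 0" using assms(1) unfolding ee_def by simp
  then have "\<forall>x\<in>V. (\<Sum>y\<in>V. c x y * (h x - h y) * (h x - h y)) = 0"
    using nn fin by (subst sum_nonneg_eq_0_iff[symmetric]) (auto intro: sum_nonneg)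
  then have "c x y * (h x - h y) * (h x - h y) = 0"
    using nn fin assms(2,3) by (simp add: sum_nonneg_eq_0_iff)
  moreover have "c x y > 0" using c_pos assms by simp
  ultimately show ?thesis by simp
qed

lemma cap_pos:
  assumes "A \<subseteq> V" "B \<subseteq> V" "A \<inter> B = {}" "A \<noteq> {}" "B \<noteq> {}"
  shows "capacity V P m A B > 0"
proof -
  obtain h where h: "feas A B h" "capacity V P m A B = ee h h"
    using cap_attain[OF assms(1-3)] by blast
  obtain a b where ab: "a \<in> A" "b \<in> B" using assms by blast
  show ?thesis
  proof (rule ccontr)
    assume "\<not> ?thesis"
    then have z: "ee h h = 0" using h ee_nn[of h] by simp
    have "(a, b) \<in> {(u, v). u \<in> V \<and> v \<in> V \<and> P u v > 0}\<^sup>*" using conn ab assms by blast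
    then have "h a = h b"
    proof (induction rule: rtrancl_induct)
      case base show ?case by (rule refl)
    next
      case (step y z')
      from step(2) have yz: "y \<in> V" "z' \<in> V" "P y z' > 0" by auto
      have "h y = h z'" by (rule ee_zero_edge[OF z yz])
      then show ?case using step(3) by simp
    qed
    then show False using h(1) ab unfolding feas_def by auto
  qed
qed

lemma cap_mono:
  assumes "A \<subseteq> A'" "A' \<subseteq> V" "B \<subseteq> V" "A' \<inter> B = {}"
  shows "capacity V P m A B \<le> capacity V P m A' B"
proof -
  obtain h where h: "feas A' B h" "capacity V P m A' B = ee h h" using cap_attain[OF assms(2-4)] by blast
  have "feas A B h" using h(1) assms(1) unfolding feas_def by auto
  then show ?thesis using cap_le h(2) by simp
qed

lemma cap_sym1:
  assumes "A \<subseteq> V" "B \<subseteq> V" "A \<inter> B = {}"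
  shows "capacity V P m B A \<le> capacity V P m A B"
proof -
  obtain h where h: "feas A B h" "capacity V P m A B = ee h h" using cap_attain[OF assms] by blast
  have f: "feas B A (\<lambda>x. (-1) * h x + 0 * h x + 1)" using h(1) unfolding feas_def by auto
  have "ee (\<lambda>x. (-1) * h x + 0 * h x + 1) (\<lambda>x. (-1) * h x + 0 * h x + 1) = ee h h"
    by (subst ee_lin, subst ee_sym, subst ee_lin) simp
  then show ?thesis using cap_le[OF f] h(2) by simp
qed

lemma cap_sym:
  assumes "A \<subseteq> V" "B \<subseteq> V" "A \<inter> B = {}"
  shows "capacity V P m B A = capacity V P m A B"
proof -
  have "capacity V P m A B \<le> capacity V P m B A" using cap_sym1[of B A] assms by (simp add: Int_commute)
  then show ?thesis using cap_sym1[OF assms] by linarith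
qed

end

lemma relu_edge: "(max 0 (a - t) - max 0 (b - t))^2 \<le> (a - b) * (max 0 (a - t) - max 0 (b - (t::real)))"
proof (cases "a \<le> t")
  case True
  show ?thesis
  proof (cases "b \<le> t")
    case True then show ?thesis using \<open>a \<le> t\<close> by simp
  next
    case False
    then have e: "(max 0 (a - t) - max 0 (b - t)) = - (b - t)" using \<open>a \<le> t\<close> by simp
    have i: "(b - t)^2 \<le> (b - a) * (b - t)" using \<open>a \<le> t\<close> False
      by (simp add: power2_eq_square mult_right_mono)
    have e1: "(a - b) * (-(b - t)) = (b - a) * (b - t)" by (simp add: algebra_simps)
    have e2: "(-(b - t))^2 = (b - t)^2" by (simp only: power2_minus)
    show ?thesis unfolding e using i e1 e2 by linarith
  qed
next
  case False
  show ?thesis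
  proof (cases "b \<le> t")
    case True
    then have "(max 0 (a - t) - max 0 (b - t)) = (a - t)" using False by simp
    moreover have "(a - t)^2 \<le> (a - b) * (a - t)" using True False
      by (simp add: power2_eq_square mult_right_mono)
    ultimately show ?thesis by simp
  next
    case True2: False
    then have "(max 0 (a - t) - max 0 (b - t)) = a - b" using False by simp
    then show ?thesis by (simp add: power2_eq_square)
  qed
qed

lemma relu_edge2: "(max 0 (t - a) - max 0 (t - b))^2 \<le> (a - b) * (- max 0 (t - a) - - max 0 (t - (b::real)))"
proof -
  have h: "(max 0 (-a - -t) - max 0 (-b - -t))^2 \<le> (-a - -b) * (max 0 (-a - -t) - max 0 (-b - -t))"
    by (rule relu_edge)
  have e1: "-a - -t = t - a" "-b - -t = t - b" by simp_all
  have e2: "(-a - -b) * (max 0 (t - a) - max 0 (t - b)) = (a - b) * (- max 0 (t - a) - - max 0 (t - b))"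
    by (simp add: algebra_simps)
  show ?thesis using h unfolding e1 e2 .
qed

lemma relu_edge3: "(max 0 (t - a) - max 0 (t - b))^2 \<le> (a - b) * (max 0 (t - b) - max 0 (t - (a::real)))"
  using relu_edge2[of t a b] by simp

context chain begin

lemma inner_nrm: "inner_m V m f f = nrm f"
  unfolding inner_m_def nrm_def by simp

lemma lam_le:
  assumes "X \<subseteq> V" "\<And>x. x \<in> V - X \<Longrightarrow> g x = 0" "nrm g > 0"
  shows "lambda_D V P m X \<le> ee g g / nrm g"
proof -
  define a where "a = 1 / sqrt (nrm g)"
  define f where "f = (\<lambda>x. a * g x)"
  have a2: "a^2 = 1 / nrm g" using assms(3) by (simp add: a_def power_divide)
  have "nrm f = 1" unfolding f_def nrm_scale a2 using assms(3) by simp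
  then have n1: "norm2_m V m f = 1" unfolding norm2_m_def inner_nrm by simp
  have z: "\<forall>x\<in>V - X. f x = 0" using assms(2) by (simp add: f_def)
  have "dirichlet V P m f f = ee g g / nrm g" unfolding dir_ee f_def ee_scale a2 by simp
  then have "\<exists>f'. ee g g / nrm g = dirichlet V P m f' f' \<and> norm2_m V m f' = 1 \<and> (\<forall>x\<in>V - X. f' x = 0)"
    using n1 z by (intro exI[of _ f]) simp
  then have "ee g g / nrm g \<in> {dirichlet V P m f f | f. norm2_m V m f = 1 \<and> (\<forall>x\<in>V - X. f x = 0)}"
    by simp
  then show ?thesis unfolding lambda_D_def
    by (rule cInf_lower) (auto intro!: bdd_belowI[of _ 0] simp: dir_ee ee_nn)
qed

lemma lam_ge:
  assumes "X \<subseteq> V" "X \<noteq> {}" "\<And>f. (\<forall>x\<in>V - X. f x = 0) \<Longrightarrow> k * nrm f \<le> ee f f"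
  shows "k \<le> lambda_D V P m X"
  unfolding lambda_D_def
proof (rule cInf_greatest)
  obtain x0 where x0: "x0 \<in> X" using assms by blast
  then have "x0 \<in> V" using assms by auto
  then have mx: "m x0 > 0" by (rule mpos)
  define f0 where "f0 = (\<lambda>x. if x = x0 then 1 / sqrt (m x0) else 0)"
  have "nrm f0 = (\<Sum>x\<in>V. if x = x0 then 1 else 0)"
    unfolding nrm_def f0_def using mx by (intro sum.cong refl) auto
  also have "\<dots> = 1" using \<open>x0 \<in> V\<close> fin by simp
  finally have "norm2_m V m f0 = 1" unfolding norm2_m_def inner_nrm by simp
  moreover have "\<forall>x\<in>V - X. f0 x = 0" using x0 by (auto simp: f0_def)
  ultimately show "{dirichlet V P m f f | f. norm2_m V m f = 1 \<and> (\<forall>x\<in>V - X. f x = 0)} \<noteq> {}" by blast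
next
  fix v assume "v \<in> {dirichlet V P m f f | f. norm2_m V m f = 1 \<and> (\<forall>x\<in>V - X. f x = 0)}"
  then obtain f where f: "v = dirichlet V P m f f" "norm2_m V m f = 1" "\<forall>x\<in>V - X. f x = 0" by blast
  have "nrm f = 1" using f(2) unfolding norm2_m_def inner_nrm by simp
  then show "k \<le> v" using assms(3)[OF f(3)] f(1) by (simp add: dir_ee)
qed

lemma upper:
  assumes AB: "A \<subseteq> V" "B \<subseteq> V" "A \<inter> B = {}" "A \<noteq> {}" "B \<noteq> {}"
  shows "\<exists>X. X \<subseteq> V \<and> X \<noteq> {} \<and> X \<noteq> V \<and>
     lambda_D V P m X \<le> 2 * capacity V P m A B / sum m B \<and>
     lambda_D V P m (V - X) \<le> 2 * capacity V P m A B / sum m A"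
proof -
  obtain h where h: "feas A B h" "capacity V P m A B = ee h h" "\<forall>g. feas A B g \<longrightarrow> ee h h \<le> ee g g"
    using cap_attain[OF AB(1-3)] by blast
  define C where "C = capacity V P m A B"
  define X where "X = {x\<in>V. h x > 1/2}"
  have hA: "\<And>x. x \<in> A \<Longrightarrow> h x = 0" and hB: "\<And>x. x \<in> B \<Longrightarrow> h x = 1" using h(1) unfolding feas_def by auto
  have XV: "X \<subseteq> V" unfolding X_def by auto
  have BX: "B \<subseteq> X" using AB hB unfolding X_def by auto
  have AX: "A \<inter> X = {}" using hA unfolding X_def by auto
  have Xne: "X \<noteq> {}" using BX AB by auto
  have XnV: "X \<noteq> V" using AX AB by auto
  have mA: "sum m A > 0" and mB: "sum m B > 0" using msum_pos AB by auto
  define g where "g = (\<lambda>x. max 0 (h x - 1/2))"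
  define g' where "g' = (\<lambda>x. max 0 (1/2 - h x))"
  have e1: "ee g g \<le> ee h g"
    by (rule ee_edge_mono) (simp add: g_def relu_edge)
  have "ee h (\<lambda>x. 1 * g x + (-1/2) * h x + 0) = 0"
    by (rule foc[OF h(1) h(3)]) (auto simp: g_def hA hB)
  then have e2: "ee h g = C / 2" using ee_lin[of h 1 g "-1/2" h 0] h(2) by (simp add: C_def)
  have e3: "ee g' g' \<le> ee h (\<lambda>x. (-1) * g' x + 0 * g' x + 0)"
  proof (rule ee_edge_mono)
    fix x y assume "x \<in> V" "y \<in> V"
    have eq: "(-1) * g' x + 0 * g' x + 0 - ((-1) * g' y + 0 * g' y + 0) = max 0 (1/2 - h y) - max 0 (1/2 - h x)"
      by (simp add: g'_def)
    show "(g' x - g' y)^2 \<le> (h x - h y) * ((-1) * g' x + 0 * g' x + 0 - ((-1) * g' y + 0 * g' y + 0))"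
      unfolding eq unfolding g'_def by (rule relu_edge3)
  qed
  have "ee h (\<lambda>x. (-1) * g' x + (-1/2) * h x + 1/2) = 0"
    by (rule foc[OF h(1) h(3)]) (auto simp: g'_def hA hB)
  then have e4: "ee h (\<lambda>x. (-1) * g' x + 0 * g' x + 0) = C / 2"
    using ee_lin[of h "-1" g' "-1/2" h "1/2"] ee_lin[of h "-1" g' 0 g' 0] h(2) by (simp add: C_def)
  have n1: "nrm g \<ge> 1/4 * sum m B" using AB by (intro nrm_ge) (auto simp: g_def hB)
  have n2: "nrm g' \<ge> 1/4 * sum m A" using AB by (intro nrm_ge) (auto simp: g'_def hA)
  have C0: "C \<ge> 0" using h(2) ee_nn C_def by simp
  have "lambda_D V P m X \<le> ee g g / nrm g"
    using XV mB n1 by (intro lam_le) (auto simp: g_def X_def)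
  also have "\<dots> \<le> (C/2) / (1/4 * sum m B)"
    using e1 e2 n1 mB C0 by (intro frac_le) auto
  also have "\<dots> = 2 * C / sum m B" by simp
  finally have l1: "lambda_D V P m X \<le> 2 * C / sum m B" .
  have "lambda_D V P m (V - X) \<le> ee g' g' / nrm g'"
    using XV mA n2 by (intro lam_le) (auto simp: g'_def X_def)
  also have "\<dots> \<le> (C/2) / (1/4 * sum m A)"
    using e3 e4 n2 mA C0 by (intro frac_le) auto
  also have "\<dots> = 2 * C / sum m A" by simp
  finally have l2: "lambda_D V P m (V - X) \<le> 2 * C / sum m A" .
  show ?thesis using XV Xne XnV l1 l2 unfolding C_def by blast
qed

end

lemma alg1:
  fixes r s :: real assumes r: "r \<ge> 1" and s: "s \<ge> 1"
  shows "(r * s - 1) * (3 - r * s) \<le> (r - 1) * (3 - r) + (s - 1 / s)"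
proof -
  have s0: "s > 0" using s by simp
  have p1: "0 \<le> (r - 1) * ((s + 1) * r + s - 3)"
  proof (rule mult_nonneg_nonneg)
    show "0 \<le> r - 1" using r by simp
    have "(s + 1) * r \<ge> s + 1" using mult_left_mono[of 1 r "s+1"] r s by simp
    then show "0 \<le> (s + 1) * r + s - 3" using s by linarith
  qed
  have id1: "(r - 1) * ((s + 1) * r + s - 3) = (3 - s) - r * (4 - r * (s + 1))" by (simp add: algebra_simps)
  have h1: "r * (4 - r * (s + 1)) \<le> 3 - s" using p1 id1 by linarith
  have h2: "3 - s \<le> (s + 1) / s"
  proof -
    have "0 \<le> (s - 1)^2" by simp
    then have "(3 - s) * s \<le> s + 1" by (simp add: power2_eq_square algebra_simps)
    then show ?thesis using s0 by (simp add: le_divide_eq)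
  qed
  have br: "0 \<le> (s + 1) / s - r * (4 - r * (s + 1))" using h1 h2 by linarith
  have "0 \<le> (s - 1) * ((s + 1) / s - r * (4 - r * (s + 1)))"
    using br s by (intro mult_nonneg_nonneg) auto
  also have "(s - 1) * ((s + 1) / s - r * (4 - r * (s + 1))) =
     ((r - 1) * (3 - r) + (s - 1 / s)) - (r * s - 1) * (3 - r * s)"
    using s0 by (simp add: field_simps)
  finally show ?thesis by simp
qed

lemma alg2:
  fixes a b L :: real assumes a: "a > 0" and b: "b \<ge> a"
    and L: "L \<ge> (b / a - 1) * (3 - b / a)"
  shows "(b^2 - a^2) - 2 * a^2 * L + a^4 * (1 / a^2 - 1 / b^2) + (b^2 - a^2)^2 / b^2 \<le> 4 * (b - a)^2"
proof -
  have b0: "b > 0" using a b by simp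
  have "2 * a^2 * ((b / a - 1) * (3 - b / a)) \<le> 2 * a^2 * L"
    using L by (intro mult_left_mono) auto
  moreover have "2 * a^2 * ((b / a - 1) * (3 - b / a)) = 2 * (b - a) * (3 * a - b)"
    using a by (simp add: field_simps power2_eq_square)
  moreover have "(b^2 - a^2) + a^4 * (1 / a^2 - 1 / b^2) + (b^2 - a^2)^2 / b^2 = 2 * (b^2 - a^2)"
    using a b0 unfolding power4_eq_xxxx by (simp add: field_simps power2_eq_square)
  moreover have "2 * (b^2 - a^2) - 2 * (b - a) * (3 * a - b) = 4 * (b - a)^2"
    by (simp add: algebra_simps power2_eq_square)
  ultimately show ?thesis by linarith
qed

definition wt :: "(nat \<Rightarrow> real) \<Rightarrow> nat \<Rightarrow> real" where "wt t j = t (Suc j)^2 - t j^2"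
definition Gf :: "(nat \<Rightarrow> real) \<Rightarrow> nat \<Rightarrow> real \<Rightarrow> real" where
  "Gf t j v = (if t (Suc j) \<le> v then 1 else v^2 / (t (Suc j) * t j))"

locale seq =
  fixes t :: "nat \<Rightarrow> real" and n :: nat
  assumes smono: "\<And>i j. i < j \<Longrightarrow> j \<le> n \<Longrightarrow> t i < t j" and t0: "t 0 = 0"
begin

lemma tle: "i \<le> n \<Longrightarrow> j \<le> n \<Longrightarrow> t i \<le> t j \<longleftrightarrow> i \<le> j"
  by (metis le_less not_le smono)

lemma tpos: "1 \<le> j \<Longrightarrow> j \<le> n \<Longrightarrow> t j > 0"
  using smono[of 0 j] t0 by simp

lemma tnn: "j \<le> n \<Longrightarrow> t j \<ge> 0"
  using tpos[of j] t0 by (cases j) auto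

lemma wt_nn: "j < n \<Longrightarrow> wt t j \<ge> 0"
  unfolding wt_def using smono[of j "Suc j"] tnn[of j]
  by (simp add: power_mono)

lemma tele1: "p \<le> q \<Longrightarrow> (\<Sum>j=p..<q. wt t j) = t q^2 - t p^2"
  unfolding wt_def by (rule sum_Suc_diff'[of p q "\<lambda>j. t j^2"])

lemma tele2:
  assumes "1 \<le> p" "p \<le> q" "q \<le> n"
  shows "(\<Sum>j=p..<q. wt t j / (t (Suc j) * t j)^2) = 1 / t p^2 - 1 / t q^2"
proof -
  have "(\<Sum>j=p..<q. wt t j / (t (Suc j) * t j)^2) = (\<Sum>j=p..<q. (- 1 / t (Suc j)^2) - (- 1 / t j^2))"
  proof (rule sum.cong[OF refl])
    fix j assume "j \<in> {p..<q}"
    then have "t j > 0" "t (Suc j) > 0" using assms tpos by auto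
    then show "wt t j / (t (Suc j) * t j)^2 = (- 1 / t (Suc j)^2) - (- 1 / t j^2)"
      unfolding wt_def by (simp add: field_simps power2_eq_square)
  qed
  also have "\<dots> = (- 1 / t q^2) - (- 1 / t p^2)"
    by (rule sum_Suc_diff'[of p q "\<lambda>j. - 1 / t j^2"]) (rule assms)
  finally show ?thesis by simp
qed

lemma tele3:
  "1 \<le> p \<Longrightarrow> p \<le> q \<Longrightarrow> q \<le> n \<Longrightarrow>
    (\<Sum>j=p..<q. wt t j / (t (Suc j) * t j)) \<ge> (t q / t p - 1) * (3 - t q / t p)"
proof (induction q)
  case 0 then show ?case by simp
next
  case (Suc q)
  show ?case
  proof (cases "p = Suc q")
    case True
    have "t p > 0" using Suc.prems tpos by auto
    then show ?thesis using True by simp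
  next
    case False
    then have pq: "p \<le> q" using Suc.prems by simp
    have IH: "(\<Sum>j=p..<q. wt t j / (t (Suc j) * t j)) \<ge> (t q / t p - 1) * (3 - t q / t p)"
      using Suc.IH Suc.prems pq by simp
    have tp: "t p > 0" and tq: "t q > 0" and tq1: "t (Suc q) > 0" using Suc.prems pq tpos by auto
    have "t p \<le> t q" using tle[of p q] pq Suc.prems by simp
    then have r1: "t q / t p \<ge> 1" using tp by simp
    have "t q < t (Suc q)" using smono[of q "Suc q"] Suc.prems by simp
    then have s1: "t (Suc q) / t q \<ge> 1" using tq by simp
    have trm: "wt t q / (t (Suc q) * t q) = t (Suc q) / t q - 1 / (t (Suc q) / t q)"
      unfolding wt_def using tq tq1 by (simp add: field_simps power2_eq_square)
    have rs: "t (Suc q) / t p = (t q / t p) * (t (Suc q) / t q)" using tq by simp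
    have "(\<Sum>j=p..<Suc q. wt t j / (t (Suc j) * t j)) = (\<Sum>j=p..<q. wt t j / (t (Suc j) * t j)) + wt t q / (t (Suc q) * t q)"
      using pq by simp
    also have "\<dots> \<ge> (t q / t p - 1) * (3 - t q / t p) + (t (Suc q) / t q - 1 / (t (Suc q) / t q))"
      using IH trm by simp
    finally have "(\<Sum>j=p..<Suc q. wt t j / (t (Suc j) * t j)) \<ge> (t q / t p - 1) * (3 - t q / t p) + (t (Suc q) / t q - 1 / (t (Suc q) / t q))" .
    moreover have "((t q / t p) * (t (Suc q) / t q) - 1) * (3 - (t q / t p) * (t (Suc q) / t q)) \<le> (t q / t p - 1) * (3 - t q / t p) + (t (Suc q) / t q - 1 / (t (Suc q) / t q))"
      by (rule alg1[OF r1 s1])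
    ultimately show ?thesis unfolding rs by linarith
  qed
qed

lemma edge:
  assumes pq: "p \<le> q" "q \<le> n"
  shows "(\<Sum>j<n. wt t j * (Gf t j (t q) - Gf t j (t p))^2) \<le> 4 * (t q - t p)^2"
proof -
  define T where "T = (\<lambda>j. wt t j * (Gf t j (t q) - Gf t j (t p))^2)"
  have "(\<Sum>j<n. T j) = (\<Sum>j=0..<q. T j) + (\<Sum>j=q..<n. T j)"
    using pq by (simp add: atLeast0LessThan[symmetric] sum.atLeastLessThan_concat)
  also have "(\<Sum>j=0..<q. T j) = (\<Sum>j=0..<p. T j) + (\<Sum>j=p..<q. T j)"
    using pq by (simp add: sum.atLeastLessThan_concat)
  finally have split: "(\<Sum>j<n. T j) = (\<Sum>j=0..<p. T j) + (\<Sum>j=p..<q. T j) + (\<Sum>j=q..<n. T j)" .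
  have A: "(\<Sum>j=0..<p. T j) = 0"
  proof (rule sum.neutral, rule ballI)
    fix j assume "j \<in> {0..<p}"
    then have "Suc j \<le> p" by simp
    then have "t (Suc j) \<le> t p" "t (Suc j) \<le> t q" using tle pq by auto
    then show "T j = 0" unfolding T_def Gf_def by simp
  qed
  have B: "(\<Sum>j=p..<q. T j) = (\<Sum>j=p..<q. wt t j * (1 - t p^2 / (t (Suc j) * t j))^2)"
  proof (rule sum.cong[OF refl])
    fix j assume "j \<in> {p..<q}"
    then have "Suc j \<le> q" "p < Suc j" by auto
    then have "t (Suc j) \<le> t q" "t p < t (Suc j)" using tle pq smono by auto
    then show "T j = wt t j * (1 - t p^2 / (t (Suc j) * t j))^2" unfolding T_def Gf_def by simp
  qed
  have C: "(\<Sum>j=q..<n. T j) = (t q^2 - t p^2)^2 * (\<Sum>j=q..<n. wt t j / (t (Suc j) * t j)^2)"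
    unfolding sum_distrib_left
  proof (rule sum.cong[OF refl])
    fix j assume "j \<in> {q..<n}"
    then have "q < Suc j" "p < Suc j" "Suc j \<le> n" using pq by auto
    then have "t q < t (Suc j)" "t p < t (Suc j)" using smono pq by auto
    then have "T j = wt t j * (t q^2 / (t (Suc j) * t j) - t p^2 / (t (Suc j) * t j))^2"
      unfolding T_def Gf_def by simp
    also have "\<dots> = (t q^2 - t p^2)^2 * (wt t j / (t (Suc j) * t j)^2)"
      by (simp add: diff_divide_distrib[symmetric] power_divide)
    finally show "T j = (t q^2 - t p^2)^2 * (wt t j / (t (Suc j) * t j)^2)" .
  qed
  have cnn: "0 \<le> (t q^2 - t p^2)^2" by simp
  show ?thesis
  proof (cases "p = 0")
    case True
    then have tp: "t p = 0" using t0 by simp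
    have B0: "(\<Sum>j=p..<q. T j) = t q^2"
      unfolding B tp using tele1[OF pq(1)] tp by simp
    have C0: "(\<Sum>j=q..<n. T j) \<le> t q^2"
    proof (cases "q = 0")
      case True
      then show ?thesis unfolding C using t0 tp by simp
    next
      case False
      then have tq: "t q > 0" using tpos pq by simp
      have "(\<Sum>j=q..<n. wt t j / (t (Suc j) * t j)^2) = 1 / t q^2 - 1 / t n^2"
        using tele2[of q n] False pq by simp
      also have "\<dots> \<le> 1 / t q^2" by simp
      finally have le1: "(\<Sum>j=q..<n. wt t j / (t (Suc j) * t j)^2) \<le> 1 / t q^2" .
      have "(\<Sum>j=q..<n. T j) = (t q^2)^2 * (\<Sum>j=q..<n. wt t j / (t (Suc j) * t j)^2)"
        unfolding C tp by simp
      also have "\<dots> \<le> (t q^2)^2 * (1 / t q^2)"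
        by (rule mult_left_mono[OF le1]) simp
      also have "\<dots> = t q^2" using tq by (simp add: power2_eq_square)
      finally show ?thesis .
    qed
    have "(\<Sum>j<n. T j) \<le> 2 * t q^2" using split A B0 C0 by linarith
    also have "\<dots> \<le> 4 * (t q - t p)^2" using tp by simp
    finally show ?thesis unfolding T_def .
  next
    case False
    then have p1: "1 \<le> p" by simp
    have tp: "t p > 0" and tq: "t q > 0" using p1 pq tpos by auto
    have tpq: "t p \<le> t q" using tle pq by simp
    define S1 where "S1 = (\<Sum>j=p..<q. wt t j / (t (Suc j) * t j))"
    have "(\<Sum>j=p..<q. T j) = (\<Sum>j=p..<q. wt t j - 2 * t p^2 * (wt t j / (t (Suc j) * t j)) + t p^4 * (wt t j / (t (Suc j) * t j)^2))"
      unfolding B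
    proof (rule sum.cong[OF refl])
      fix j assume "j \<in> {p..<q}"
      then have "t j > 0" "t (Suc j) > 0" using tpos p1 pq by auto
      then show "wt t j * (1 - t p^2 / (t (Suc j) * t j))^2 = wt t j - 2 * t p^2 * (wt t j / (t (Suc j) * t j)) + t p^4 * (wt t j / (t (Suc j) * t j)^2)"
        by (simp add: field_simps power2_eq_square power4_eq_xxxx)
    qed
    also have "\<dots> = (\<Sum>j=p..<q. wt t j) - 2 * t p^2 * S1 + t p^4 * (\<Sum>j=p..<q. wt t j / (t (Suc j) * t j)^2)"
      unfolding S1_def by (simp only: sum.distrib sum_subtractf flip: sum_distrib_left)
    also have "\<dots> = (t q^2 - t p^2) - 2 * t p^2 * S1 + t p^4 * (1 / t p^2 - 1 / t q^2)"
      unfolding tele1[OF pq(1)] tele2[OF p1 pq] by (rule refl)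
    finally have B1: "(\<Sum>j=p..<q. T j) = (t q^2 - t p^2) - 2 * t p^2 * S1 + t p^4 * (1 / t p^2 - 1 / t q^2)" .
    have "(\<Sum>j=q..<n. wt t j / (t (Suc j) * t j)^2) = 1 / t q^2 - 1 / t n^2"
      using tele2[of q n] p1 pq by simp
    also have "\<dots> \<le> 1 / t q^2" by simp
    finally have C1: "(\<Sum>j=q..<n. T j) \<le> (t q^2 - t p^2)^2 / t q^2"
      unfolding C using cnn mult_left_mono by fastforce
    have L: "S1 \<ge> (t q / t p - 1) * (3 - t q / t p)" unfolding S1_def by (rule tele3[OF p1 pq])
    have "(\<Sum>j<n. T j) \<le> (t q^2 - t p^2) - 2 * t p^2 * S1 + t p^4 * (1 / t p^2 - 1 / t q^2) + (t q^2 - t p^2)^2 / t q^2"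
      using split A B1 C1 by linarith
    also have "\<dots> \<le> 4 * (t q - t p)^2" by (rule alg2[OF tp tpq L])
    finally show ?thesis unfolding T_def .
  qed
qed

end

lemma strict_list:
  fixes T :: "real set" assumes "finite T"
  obtains L where "sorted_wrt (<) L" "set L = T" "length L = card T"
  using sorted_list_of_set.finite_set_strict_sorted[of T] assms by auto

lemma abs_edge: "(\<bar>u\<bar> - \<bar>v\<bar>)^2 \<le> (u - v) * (u - (v::real))"
proof -
  have "\<bar>\<bar>u\<bar> - \<bar>v\<bar>\<bar> \<le> \<bar>u - v\<bar>" by (rule abs_triangle_ineq3)
  then have "\<bar>\<bar>u\<bar> - \<bar>v\<bar>\<bar>^2 \<le> \<bar>u - v\<bar>^2" by (intro power_mono) auto
  then show ?thesis by (simp add: power2_eq_square)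
qed

context chain begin

lemma mazya_nn:
  assumes X: "X \<subseteq> V" and k: "k \<ge> 0"
    and hyp: "\<And>F. F \<subseteq> X \<Longrightarrow> F \<noteq> {} \<Longrightarrow> k * sum m F \<le> capacity V P m (V - X) F"
    and a0: "\<And>x. x \<in> V - X \<Longrightarrow> a x = 0" and ann: "\<And>x. a x \<ge> 0"
  shows "k * nrm a \<le> 4 * ee a a"
proof -
  define T where "T = insert 0 (a ` V)"
  have finT: "finite T" unfolding T_def using fin by simp
  obtain L where L: "sorted_wrt (<) L" "set L = T" "length L = card T" using strict_list[OF finT] by blast
  have T0: "0 \<in> T" unfolding T_def by simp
  have "card T > 0" using finT T0 card_gt_0_iff by blast
  then have Lne: "length L \<ge> 1" using L(3) by simp
  define n where "n = length L - 1"
  define t where "t j = L ! j" for j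
  have tT: "t j \<in> T" if "j \<le> n" for j
  proof -
    have "j < length L" using that Lne unfolding n_def by simp
    then have "L ! j \<in> set L" by (rule nth_mem)
    then show ?thesis using L(2) unfolding t_def by simp
  qed
  have smono: "t i < t j" if "i < j" "j \<le> n" for i j
    using sorted_wrt_nth_less[OF L(1) that(1)] that Lne unfolding t_def n_def by simp
  have Tnn: "\<And>v. v \<in> T \<Longrightarrow> v \<ge> 0" unfolding T_def using ann by auto
  have tk: "\<exists>k\<le>n. t k = v" if "v \<in> T" for v
  proof -
    have "v \<in> set L" using that L(2) by simp
    then obtain k where "k < length L" "L ! k = v" by (auto simp: in_set_conv_nth)
    then show ?thesis unfolding t_def n_def by (intro exI[of _ k]) auto
  qed
  have t0: "t 0 = 0"
  proof -
    obtain k where k: "k \<le> n" "t k = 0" using tk[OF T0] by blast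
    have "t 0 \<ge> 0" using Tnn tT[of 0] by simp
    moreover have "t 0 \<le> t k" using smono[of 0 k] k by (cases "k = 0") auto
    ultimately show ?thesis using k by simp
  qed
  interpret S: seq t n by unfold_locales (use smono t0 in auto)
  define g where "g j x = Gf t j (a x)" for j x
  define F where "F j = {x\<in>V. t (Suc j) \<le> a x}" for j
  have capb: "k * sum m (F j) \<le> ee (g j) (g j)" if j: "j < n" for j
  proof -
    have tp: "t (Suc j) > 0" using S.tpos j by simp
    have FX: "F j \<subseteq> X"
    proof
      fix x assume "x \<in> F j"
      then have "x \<in> V" "a x > 0" using tp unfolding F_def by auto
      then show "x \<in> X" using a0 by force
    qed
    have "t (Suc j) \<in> T" using tT j by simp
    then obtain x where x: "x \<in> V" "a x = t (Suc j)" using tp unfolding T_def by auto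
    then have Fne: "F j \<noteq> {}" unfolding F_def by auto
    have fe: "feas (V - X) (F j) (g j)"
      unfolding feas_def g_def Gf_def F_def using a0 tp by auto
    have "k * sum m (F j) \<le> capacity V P m (V - X) (F j)" by (rule hyp[OF FX Fne])
    also have "\<dots> \<le> ee (g j) (g j)" by (rule cap_le[OF fe])
    finally show ?thesis .
  qed
  have sq: "a x * a x = (\<Sum>j<n. if t (Suc j) \<le> a x then wt t j else 0)" if x: "x \<in> V" for x
  proof -
    have "a x \<in> T" using x unfolding T_def by simp
    then obtain p where p: "p \<le> n" "t p = a x" using tk by blast
    have "(\<Sum>j<n. if t (Suc j) \<le> a x then wt t j else 0) = (\<Sum>j<n. if j < p then wt t j else 0)"
    proof (rule sum.cong[OF refl])
      fix j assume "j \<in> {..<n}"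
      then have "t (Suc j) \<le> t p \<longleftrightarrow> Suc j \<le> p" using S.tle[of "Suc j" p] p(1) by simp
      then have "t (Suc j) \<le> a x \<longleftrightarrow> Suc j \<le> p" using p(2) by simp
      then show "(if t (Suc j) \<le> a x then wt t j else 0) = (if j < p then wt t j else 0)" using p by simp
    qed
    also have "\<dots> = (\<Sum>j\<in>{j\<in>{..<n}. j < p}. wt t j)"
      by (rule sum.inter_filter[symmetric]) simp
    also have "{j\<in>{..<n}. j < p} = {0..<p}" using p by auto
    also have "(\<Sum>j=0..<p. wt t j) = t p^2 - t 0^2" by (rule S.tele1) simp
    finally show ?thesis using p t0 by (simp add: power2_eq_square)
  qed
  have nrmF: "nrm a = (\<Sum>j<n. wt t j * sum m (F j))"
  proof -
    have "nrm a = (\<Sum>x\<in>V. \<Sum>j<n. (if t (Suc j) \<le> a x then wt t j * m x else 0))"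
      unfolding nrm_def
    proof (intro sum.cong refl)
      fix x assume "x \<in> V"
      then have "a x * a x * m x = (\<Sum>j<n. (if t (Suc j) \<le> a x then wt t j else 0) * m x)"
        by (simp add: sq sum_distrib_right)
      also have "\<dots> = (\<Sum>j<n. (if t (Suc j) \<le> a x then wt t j * m x else 0))"
        by (intro sum.cong refl) simp
      finally show "a x * a x * m x = (\<Sum>j<n. (if t (Suc j) \<le> a x then wt t j * m x else 0))" .
    qed
    also have "\<dots> = (\<Sum>j<n. \<Sum>x\<in>V. (if t (Suc j) \<le> a x then wt t j * m x else 0))" by (rule sum.swap)
    also have "\<dots> = (\<Sum>j<n. wt t j * sum m (F j))"
      unfolding F_def using fin
      by (intro sum.cong refl) (simp add: sum.inter_filter sum_distrib_left, intro sum.cong refl, simp)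
    finally show ?thesis .
  qed
  have "k * nrm a = (\<Sum>j<n. wt t j * (k * sum m (F j)))"
    unfolding nrmF by (simp add: sum_distrib_left algebra_simps)
  also have "\<dots> \<le> (\<Sum>j<n. wt t j * ee (g j) (g j))"
    by (intro sum_mono mult_left_mono capb S.wt_nn) auto
  also have "\<dots> = (\<Sum>x\<in>V. \<Sum>y\<in>V. c x y * (\<Sum>j<n. wt t j * (g j x - g j y)^2)) / 2"
  proof -
    have "(\<Sum>j<n. wt t j * ee (g j) (g j)) = (\<Sum>j<n. \<Sum>x\<in>V. \<Sum>y\<in>V. wt t j * (c x y * (g j x - g j y) * (g j x - g j y))) / 2"
      unfolding ee_def by (simp add: sum_distrib_left sum_divide_distrib)
    also have "(\<Sum>j<n. \<Sum>x\<in>V. \<Sum>y\<in>V. wt t j * (c x y * (g j x - g j y) * (g j x - g j y))) =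
        (\<Sum>x\<in>V. \<Sum>j<n. \<Sum>y\<in>V. wt t j * (c x y * (g j x - g j y) * (g j x - g j y)))" by (rule sum.swap)
    also have "\<dots> = (\<Sum>x\<in>V. \<Sum>y\<in>V. \<Sum>j<n. wt t j * (c x y * (g j x - g j y) * (g j x - g j y)))"
      by (intro sum.cong refl sum.swap)
    also have "\<dots> = (\<Sum>x\<in>V. \<Sum>y\<in>V. c x y * (\<Sum>j<n. wt t j * (g j x - g j y)^2))"
      by (intro sum.cong refl) (simp add: sum_distrib_left power2_eq_square algebra_simps)
    finally show ?thesis .
  qed
  also have "\<dots> \<le> (\<Sum>x\<in>V. \<Sum>y\<in>V. c x y * (4 * (a x - a y)^2)) / 2"
  proof (intro divide_right_mono sum_mono mult_left_mono)
    fix x y assume xy: "x \<in> V" "y \<in> V"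
    show "0 \<le> c x y" using c_nn xy by simp
    have "a x \<in> T" "a y \<in> T" using xy unfolding T_def by auto
    obtain p where p: "p \<le> n" "t p = a x" using tk \<open>a x \<in> T\<close> by blast
    obtain q where q: "q \<le> n" "t q = a y" using tk \<open>a y \<in> T\<close> by blast
    note pq = p q
    show "(\<Sum>j<n. wt t j * (g j x - g j y)^2) \<le> 4 * (a x - a y)^2"
    proof (cases "p \<le> q")
      case True
      have "(\<Sum>j<n. wt t j * (Gf t j (t q) - Gf t j (t p))^2) \<le> 4 * (t q - t p)^2"
        by (rule S.edge[OF True pq(3)])
      then show ?thesis unfolding g_def using pq by (simp add: power2_commute)
    next
      case False
      have "(\<Sum>j<n. wt t j * (Gf t j (t p) - Gf t j (t q))^2) \<le> 4 * (t p - t q)^2"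
        using False pq by (intro S.edge) auto
      then show ?thesis unfolding g_def using pq by simp
    qed
  qed simp
  also have "\<dots> = 4 * ee a a"
    unfolding ee_def by (simp add: sum_distrib_left power2_eq_square algebra_simps)
  finally show ?thesis .
qed

lemma mazya:
  assumes X: "X \<subseteq> V" and k: "k \<ge> 0"
    and hyp: "\<And>F. F \<subseteq> X \<Longrightarrow> F \<noteq> {} \<Longrightarrow> k * sum m F \<le> capacity V P m (V - X) F"
    and f0: "\<And>x. x \<in> V - X \<Longrightarrow> f x = 0"
  shows "k * nrm f \<le> 4 * ee f f"
proof -
  have "k * nrm (\<lambda>x. \<bar>f x\<bar>) \<le> 4 * ee (\<lambda>x. \<bar>f x\<bar>) (\<lambda>x. \<bar>f x\<bar>)"
    by (rule mazya_nn[OF X k hyp]) (auto simp: f0)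
  moreover have "nrm (\<lambda>x. \<bar>f x\<bar>) = nrm f" unfolding nrm_def by simp
  ultimately have "k * nrm f \<le> 4 * ee (\<lambda>x. \<bar>f x\<bar>) (\<lambda>x. \<bar>f x\<bar>)" by simp
  moreover have "ee (\<lambda>x. \<bar>f x\<bar>) (\<lambda>x. \<bar>f x\<bar>) \<le> ee f f" by (rule ee_edge_mono) (rule abs_edge)
  ultimately show ?thesis by linarith
qed

end

context chain begin

lemma kappa:
  assumes "X \<subseteq> V" "X \<noteq> {}"
  shows "\<exists>B. B \<subseteq> X \<and> B \<noteq> {} \<and> (\<forall>F. F \<subseteq> X \<and> F \<noteq> {} \<longrightarrow>
     capacity V P m (V - X) B / sum m B \<le> capacity V P m (V - X) F / sum m F)"
proof -
  define S where "S = {F. F \<subseteq> X \<and> F \<noteq> {}}"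
  define r where "r F = capacity V P m (V - X) F / sum m F" for F
  have "S \<subseteq> Pow X" unfolding S_def by blast
  moreover have "finite (Pow X)" using finite_subset[OF assms(1) fin] by simp
  ultimately have finS: "finite S" by (rule finite_subset)
  have neS: "S \<noteq> {}" unfolding S_def using assms by blast
  have "Min (r ` S) \<in> r ` S" using finS neS by (intro Min_in) auto
  then obtain B where B: "B \<in> S" "r B = Min (r ` S)" by auto
  have "\<forall>F\<in>S. r B \<le> r F" unfolding B(2) using Min_le[OF finite_imageI[OF finS]] by blast
  then show ?thesis using B(1) unfolding S_def r_def by blast
qed

lemma lam_lower:
  assumes X: "X \<subseteq> V" "X \<noteq> {}" "X \<noteq> V" and B: "B \<subseteq> X" "B \<noteq> {}"
    and Bmin: "\<forall>F. F \<subseteq> X \<and> F \<noteq> {} \<longrightarrow>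
     capacity V P m (V - X) B / sum m B \<le> capacity V P m (V - X) F / sum m F"
  shows "capacity V P m (V - X) B / sum m B / 4 \<le> lambda_D V P m X"
    and "capacity V P m (V - X) B / sum m B > 0"
proof -
  define k where "k = capacity V P m (V - X) B / sum m B"
  have "capacity V P m (V - X) B > 0" using X B by (intro cap_pos) auto
  moreover have "sum m B > 0" using B X by (intro msum_pos) auto
  ultimately have kp: "k > 0" unfolding k_def by simp
  then show "capacity V P m (V - X) B / sum m B > 0" unfolding k_def .
  have hyp: "k * sum m F \<le> capacity V P m (V - X) F" if "F \<subseteq> X" "F \<noteq> {}" for F
  proof -
    have "sum m F > 0" using that X by (intro msum_pos) auto
    moreover have "k \<le> capacity V P m (V - X) F / sum m F" using Bmin that unfolding k_def by blast
    ultimately show ?thesis by (simp add: le_divide_eq)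
  qed
  have "k / 4 \<le> lambda_D V P m X"
  proof (rule lam_ge[OF X(1,2)])
    fix f :: "'a \<Rightarrow> real" assume "\<forall>x\<in>V - X. f x = 0"
    then have "k * nrm f \<le> 4 * ee f f" using X kp hyp by (intro mazya) auto
    then show "k / 4 * nrm f \<le> ee f f" by simp
  qed
  then show "capacity V P m (V - X) B / sum m B / 4 \<le> lambda_D V P m X" unfolding k_def .
qed

lemma lam_pos:
  assumes X: "X \<subseteq> V" "X \<noteq> {}" "X \<noteq> V"
  shows "lambda_D V P m X > 0"
proof -
  obtain B where "B \<subseteq> X" "B \<noteq> {}" "\<forall>F. F \<subseteq> X \<and> F \<noteq> {} \<longrightarrow>
     capacity V P m (V - X) B / sum m B \<le> capacity V P m (V - X) F / sum m F"
    using kappa[OF X(1,2)] by blast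
  note h = lam_lower[OF X this]
  have "0 < capacity V P m (V - X) B / sum m B / 4" using h(2) by simp
  then show ?thesis using h(1) by linarith
qed

lemma lower:
  assumes X: "X \<subseteq> V" "X \<noteq> {}" "X \<noteq> V"
  shows "\<exists>A B. A \<subseteq> V \<and> B \<subseteq> V \<and> A \<inter> B = {} \<and> A \<noteq> {} \<and> B \<noteq> {} \<and>
     logmean (capacity V P m A B / sum m A) (capacity V P m A B / sum m B)
       \<le> 4 * logmean (lambda_D V P m X) (lambda_D V P m (V - X))"
proof -
  have Y: "V - X \<subseteq> V" "V - X \<noteq> {}" "V - X \<noteq> V" using X by auto
  have VVX: "V - (V - X) = X" using X by auto
  obtain B where B: "B \<subseteq> X" "B \<noteq> {}" "\<forall>F. F \<subseteq> X \<and> F \<noteq> {} \<longrightarrow>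
     capacity V P m (V - X) B / sum m B \<le> capacity V P m (V - X) F / sum m F"
    using kappa[OF X(1,2)] by blast
  obtain A where A: "A \<subseteq> V - X" "A \<noteq> {}" "\<forall>F. F \<subseteq> V - X \<and> F \<noteq> {} \<longrightarrow>
     capacity V P m (V - (V - X)) A / sum m A \<le> capacity V P m (V - (V - X)) F / sum m F"
    using kappa[OF Y(1,2)] by blast
  have l1: "capacity V P m (V - X) B / sum m B / 4 \<le> lambda_D V P m X"
    using lam_lower[OF X B] by simp
  have l2: "capacity V P m X A / sum m A / 4 \<le> lambda_D V P m (V - X)"
    using lam_lower[OF Y A] unfolding VVX by simp
  have AV: "A \<subseteq> V" and BV: "B \<subseteq> V" and AB: "A \<inter> B = {}" using A B X by auto
  define C where "C = capacity V P m A B"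
  have Cp: "C > 0" unfolding C_def using AV BV AB A B by (intro cap_pos) auto
  have mA: "sum m A > 0" and mB: "sum m B > 0" using AV BV A B by (auto intro: msum_pos)
  have c1: "C \<le> capacity V P m (V - X) B"
    unfolding C_def using A B X by (intro cap_mono) auto
  have "C = capacity V P m B A" unfolding C_def using AV BV AB by (simp add: cap_sym Int_commute)
  also have "\<dots> \<le> capacity V P m X A" using A B X by (intro cap_mono) auto
  finally have c2: "C \<le> capacity V P m X A" .
  have d1: "C / sum m B \<le> 4 * lambda_D V P m X"
  proof -
    have "C / sum m B \<le> capacity V P m (V - X) B / sum m B" using c1 mB by (simp add: divide_right_mono)
    then show ?thesis using l1 by simp
  qed
  have d2: "C / sum m A \<le> 4 * lambda_D V P m (V - X)"
  proof -
    have "C / sum m A \<le> capacity V P m X A / sum m A" using c2 mA by (simp add: divide_right_mono)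
    then show ?thesis using l2 by simp
  qed
  have "logmean (C / sum m A) (C / sum m B) \<le> logmean (4 * lambda_D V P m (V - X)) (4 * lambda_D V P m X)"
    using d1 d2 Cp mA mB by (intro logmean_mono) auto
  also have "\<dots> = 4 * logmean (lambda_D V P m (V - X)) (lambda_D V P m X)"
    using lam_pos[OF X] lam_pos[OF Y] by (intro logmean_hom) auto
  also have "\<dots> = 4 * logmean (lambda_D V P m X) (lambda_D V P m (V - X))" by (simp add: logmean_sym)
  finally show ?thesis unfolding C_def using AV BV AB A B by blast
qed

lemma upper2:
  assumes AB: "A \<subseteq> V" "B \<subseteq> V" "A \<inter> B = {}" "A \<noteq> {}" "B \<noteq> {}"
  shows "\<exists>X. X \<subseteq> V \<and> X \<noteq> {} \<and> X \<noteq> V \<and>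
     logmean (lambda_D V P m X) (lambda_D V P m (V - X))
       \<le> 2 * logmean (capacity V P m A B / sum m A) (capacity V P m A B / sum m B)"
proof -
  obtain X where X: "X \<subseteq> V" "X \<noteq> {}" "X \<noteq> V"
     "lambda_D V P m X \<le> 2 * capacity V P m A B / sum m B"
     "lambda_D V P m (V - X) \<le> 2 * capacity V P m A B / sum m A"
    using upper[OF AB] by blast
  have Y: "V - X \<subseteq> V" "V - X \<noteq> {}" "V - X \<noteq> V" using X by auto
  define C where "C = capacity V P m A B"
  have Cp: "C > 0" unfolding C_def using AB by (intro cap_pos) auto
  have mA: "sum m A > 0" and mB: "sum m B > 0" using AB by (auto intro: msum_pos)
  have "logmean (lambda_D V P m X) (lambda_D V P m (V - X)) \<le> logmean (2 * (C / sum m B)) (2 * (C / sum m A))"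
    using lam_pos[OF X(1-3)] lam_pos[OF Y] X(4,5) unfolding C_def by (intro logmean_mono) auto
  also have "\<dots> = 2 * logmean (C / sum m B) (C / sum m A)"
    using Cp mA mB by (intro logmean_hom) auto
  also have "\<dots> = 2 * logmean (C / sum m A) (C / sum m B)" by (simp add: logmean_sym)
  finally show ?thesis using X unfolding C_def by blast
qed

end

theorem theorem3p3:
  fixes V :: "'a set" and P :: "'a \<Rightarrow> 'a \<Rightarrow> real" and m :: "'a \<Rightarrow> real"
  assumes "finite V"
    and "2 \<le> card V"
    and "\<And>x y. x \<in> V \<Longrightarrow> y \<in> V \<Longrightarrow> P x y \<ge> 0"
    and "\<And>x y. x \<in> V \<Longrightarrow> y \<in> V \<Longrightarrow> (P x y > 0 \<longleftrightarrow> P y x > 0)"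
    and "\<And>x y. x \<in> V \<Longrightarrow> y \<in> V \<Longrightarrow>
           (x, y) \<in> {(u, v). u \<in> V \<and> v \<in> V \<and> P u v > 0}\<^sup>*"
    and "\<And>x. x \<in> V \<Longrightarrow> m x \<ge> 0"
    and "(\<Sum>x\<in>V. m x) = 1"
    and "\<And>x y. x \<in> V \<Longrightarrow> y \<in> V \<Longrightarrow> m x * P x y = m y * P y x"
  shows "alpha_cap V P m / 4 \<le> alpha_spectral V P m
       \<and> alpha_spectral V P m \<le> 2 * alpha_cap V P m"
proof -
  interpret chain V P m using assms by unfold_locales
  define SC where "SC = {logmean (capacity V P m A B / sum m A) (capacity V P m A B / sum m B)
       | A B. A \<subseteq> V \<and> B \<subseteq> V \<and> A \<noteq> {} \<and> B \<noteq> {} \<and> A \<inter> B = {}}"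
  define SS where "SS = {logmean (lambda_D V P m X) (lambda_D V P m (V - X))
       | X. X \<subseteq> V \<and> X \<noteq> {} \<and> X \<noteq> V}"
  have ac: "alpha_cap V P m = Inf SC" unfolding alpha_cap_def SC_def by simp
  have as: "alpha_spectral V P m = Inf SS" unfolding alpha_spectral_def SS_def by simp
  have finSC: "finite SC"
  proof (rule finite_subset)
    show "SC \<subseteq> (\<lambda>(A, B). logmean (capacity V P m A B / sum m A) (capacity V P m A B / sum m B)) ` (Pow V \<times> Pow V)"
    proof
      fix v assume "v \<in> SC"
      then obtain A B where AB: "A \<subseteq> V" "B \<subseteq> V"
        "v = logmean (capacity V P m A B / sum m A) (capacity V P m A B / sum m B)"
        unfolding SC_def by blast
      then show "v \<in> (\<lambda>(A, B). logmean (capacity V P m A B / sum m A) (capacity V P m A B / sum m B)) ` (Pow V \<times> Pow V)"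
        by (intro image_eqI[of _ _ "(A, B)"]) auto
    qed
    show "finite ((\<lambda>(A, B). logmean (capacity V P m A B / sum m A) (capacity V P m A B / sum m B)) ` (Pow V \<times> Pow V))"
      using fin by simp
  qed
  have finSS: "finite SS"
  proof (rule finite_subset)
    show "SS \<subseteq> (\<lambda>X. logmean (lambda_D V P m X) (lambda_D V P m (V - X))) ` Pow V"
    proof
      fix v assume "v \<in> SS"
      then obtain X where X: "X \<subseteq> V" "v = logmean (lambda_D V P m X) (lambda_D V P m (V - X))"
        unfolding SS_def by blast
      then show "v \<in> (\<lambda>X. logmean (lambda_D V P m X) (lambda_D V P m (V - X))) ` Pow V"
        by (intro image_eqI[of _ _ X]) auto
    qed
    show "finite ((\<lambda>X. logmean (lambda_D V P m X) (lambda_D V P m (V - X))) ` Pow V)"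
      using fin by simp
  qed
  obtain x y where xy: "x \<in> V" "y \<in> V" "x \<noteq> y"
  proof -
    have "\<not> card V \<le> Suc 0" using card2 by simp
    then have "\<not> (\<forall>a\<in>V. \<forall>b\<in>V. a = b)" using card_le_Suc0_iff_eq[OF fin] by blast
    then show ?thesis using that by blast
  qed
  have neSC: "SC \<noteq> {}" unfolding SC_def using xy by blast
  have "{x} \<subseteq> V" "{x} \<noteq> {}" "{x} \<noteq> V" using xy by auto
  then have neSS: "SS \<noteq> {}" unfolding SS_def by blast
  have part1: "Inf SC / 4 \<le> Inf SS"
  proof (rule cInf_greatest[OF neSS])
    fix v assume "v \<in> SS"
    then obtain X where X: "X \<subseteq> V" "X \<noteq> {}" "X \<noteq> V"
      "v = logmean (lambda_D V P m X) (lambda_D V P m (V - X))" unfolding SS_def by blast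
    obtain A B where AB: "A \<subseteq> V" "B \<subseteq> V" "A \<inter> B = {}" "A \<noteq> {}" "B \<noteq> {}"
      "logmean (capacity V P m A B / sum m A) (capacity V P m A B / sum m B) \<le> 4 * v"
      using lower[OF X(1-3)] X(4) by blast
    have "logmean (capacity V P m A B / sum m A) (capacity V P m A B / sum m B) \<in> SC"
      unfolding SC_def using AB by blast
    then have "Inf SC \<le> logmean (capacity V P m A B / sum m A) (capacity V P m A B / sum m B)"
      by (rule cInf_lower[OF _ bdd_below_finite[OF finSC]])
    then show "Inf SC / 4 \<le> v" using AB(6) by simp
  qed
  have part2: "Inf SS / 2 \<le> Inf SC"
  proof (rule cInf_greatest[OF neSC])
    fix w assume "w \<in> SC"
    then obtain A B where AB: "A \<subseteq> V" "B \<subseteq> V" "A \<noteq> {}" "B \<noteq> {}" "A \<inter> B = {}"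
      "w = logmean (capacity V P m A B / sum m A) (capacity V P m A B / sum m B)" unfolding SC_def by blast
    obtain X where X: "X \<subseteq> V" "X \<noteq> {}" "X \<noteq> V"
      "logmean (lambda_D V P m X) (lambda_D V P m (V - X)) \<le> 2 * w"
      using upper2[of A B] AB by blast
    have "logmean (lambda_D V P m X) (lambda_D V P m (V - X)) \<in> SS"
      unfolding SS_def using X by blast
    then have "Inf SS \<le> logmean (lambda_D V P m X) (lambda_D V P m (V - X))"
      by (rule cInf_lower[OF _ bdd_below_finite[OF finSS]])
    then show "Inf SS / 2 \<le> w" using X(4) by simp
  qed
  show ?thesis unfolding ac as using part1 part2 by simp
qed

end
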